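(* Let $K\subseteq\mathbb{R}^{n}$ be compact, $T\subseteq\mathbb{R}^{n}$ compact with non-empty interior, $\delta>0$, and let $\Lambda(\delta)\subseteq\mathbb{R}^{n}$ be a finite $\delta$-net for $K+T$. Then \[ M_{\omega}(K,T)\ge M_{\omega}(K,T+\delta B_{2}^{n},\Lambda(\delta)). \]
   Context: $B_2^n$ is the closed Euclidean unit ball; a set $\Lambda$ is a $\delta$-net for $A$ if $A\subseteq\Lambda+\delta B_2^n$. $\mathbbm{1}_A$ is the indicator of $A$. $M_\omega(K,T)$ is the supremum of $\sum_i\omega_i$ over finite families $\{(x_i,\omega_i)\}$ with $x_i\in K$, $\omega_i\ge0$, such that $\sum_i\omega_i\mathbbm{1}_T(x-x_i)\le1$ for all $x\in\mathbb{R}^n$. For a finite set $\Lambda\subseteq\mathbb{R}^n$ and a set $S$, $M_\omega(K,S,\Lambda)$ is the supremum of $\sum_i\omega_i$ over finite families $\{(x_i,\omega_i)\}$ with $x_i\in\Lambda\cap K$, $\omega_i\ge0$, such that $\sum_i\omega_i\mathbbm{1}_S(x-x_i)\le1$ for all $x\in\Lambda$. *)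

theory Defs
  imports "HOL-Analysis.Analysis"
begin

text \<open>A finite family \<open>{(x_i, \<omega>_i)}\<close> is represented as a list of pairs (repetitions allowed).
  Suprema are taken in the extended reals.\<close>

definition M_omega :: "'a::euclidean_space set \<Rightarrow> 'a set \<Rightarrow> ereal" where
  "M_omega K T =
     (SUP xs \<in> {xs :: ('a \<times> real) list.
                 (\<forall>(xi, wi) \<in> set xs. xi \<in> K \<and> 0 \<le> wi) \<and>
                 (\<forall>x. sum_list (map (\<lambda>(xi, wi). wi * indicator T (x - xi)) xs) \<le> 1)}.
        ereal (sum_list (map snd xs)))"

definition M_omega_net :: "'a::euclidean_space set \<Rightarrow> 'a set \<Rightarrow> 'a set \<Rightarrow> ereal" where
  "M_omega_net K S \<Lambda> =
     (SUP xs \<in> {xs :: ('a \<times> real) list.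
                 (\<forall>(xi, wi) \<in> set xs. xi \<in> \<Lambda> \<inter> K \<and> 0 \<le> wi) \<and>
                 (\<forall>x \<in> \<Lambda>. sum_list (map (\<lambda>(xi, wi). wi * indicator S (x - xi)) xs) \<le> 1)}.
        ereal (sum_list (map snd xs)))"

definition is_delta_net :: "'a::euclidean_space set \<Rightarrow> real \<Rightarrow> 'a set \<Rightarrow> bool" where
  "is_delta_net \<Lambda> \<delta> A \<longleftrightarrow> A \<subseteq> \<Lambda> + (\<lambda>v. \<delta> *\<^sub>R v) ` cball 0 1"

end

theory Submission
  imports Defs
begin

theorem lemma2p3:
  fixes K T \<Lambda> :: "'a::euclidean_space set" and \<delta> :: real
  assumes "compact K" and "compact T" and "interior T \<noteq> {}"
    and "\<delta> > 0" and "finite \<Lambda>" and "is_delta_net \<Lambda> \<delta> (K + T)"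
  shows "M_omega K T \<ge> M_omega_net K (T + (\<lambda>v. \<delta> *\<^sub>R v) ` cball 0 1) \<Lambda>"
proof -
  define S where "S = T + (\<lambda>v. \<delta> *\<^sub>R v) ` cball 0 1"
  let ?A = "{xs :: ('a \<times> real) list.
                 (\<forall>(xi, wi) \<in> set xs. xi \<in> \<Lambda> \<inter> K \<and> 0 \<le> wi) \<and>
                 (\<forall>x \<in> \<Lambda>. sum_list (map (\<lambda>(xi, wi). wi * indicator S (x - xi)) xs) \<le> 1)}"
  let ?B = "{xs :: ('a \<times> real) list.
                 (\<forall>(xi, wi) \<in> set xs. xi \<in> K \<and> 0 \<le> wi) \<and>
                 (\<forall>x. sum_list (map (\<lambda>(xi, wi). wi * indicator T (x - xi)) xs) \<le> 1)}"
  have sub: "?A \<subseteq> ?B"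
  proof
    fix xs assume xs: "xs \<in> ?A"
    have pts: "\<forall>(xi, wi) \<in> set xs. xi \<in> K \<and> 0 \<le> wi" using xs by auto
    have "sum_list (map (\<lambda>(xi, wi). wi * indicator T (x - xi)) xs) \<le> 1" for x
    proof (cases "x \<in> K + T")
      case False
      have "\<And>p. p \<in> set xs \<Longrightarrow> (\<lambda>(xi, wi). wi * indicator T (x - xi)) p = 0"
      proof -
        fix p assume p: "p \<in> set xs"
        obtain xi wi where pe: "p = (xi, wi)" by fastforce
        have "xi \<in> K" using pts p pe by auto
        have "x - xi \<notin> T"
        proof
          assume "x - xi \<in> T"
          then have "xi + (x - xi) \<in> K + T" using \<open>xi \<in> K\<close> by (intro set_plus_intro)
          then show False using False by simp
        qed
        then show "(\<lambda>(xi, wi). wi * indicator T (x - xi)) p = 0" by (simp add: pe)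
      qed
      then have "map (\<lambda>(xi, wi). wi * indicator T (x - xi)) xs = map (\<lambda>_. 0) xs"
        by (intro map_cong) auto
      then show ?thesis by (simp add: sum_list_replicate map_replicate_const)
    next
      case True
      then have "x \<in> \<Lambda> + (\<lambda>v. \<delta> *\<^sub>R v) ` cball 0 1" using assms(6) unfolding is_delta_net_def by auto
      then obtain l u where l: "l \<in> \<Lambda>" and u: "u \<in> (\<lambda>v. \<delta> *\<^sub>R v) ` cball 0 1" and xe: "x = l + u"
        by (metis set_plus_elim)
      obtain v where v: "v \<in> cball 0 1" and ue: "u = \<delta> *\<^sub>R v" using u by auto
      have le: "(\<lambda>(xi, wi). wi * indicator T (x - xi)) p \<le> (\<lambda>(xi, wi). wi * indicator S (l - xi)) p"
        if p: "p \<in> set xs" for p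
      proof -
        obtain xi wi where pe: "p = (xi, wi)" by fastforce
        have w: "0 \<le> wi" using pts p pe by auto
        show ?thesis
        proof (cases "x - xi \<in> T")
          case True
          have "-v \<in> cball 0 1" using v by auto
          then have "\<delta> *\<^sub>R (-v) \<in> (\<lambda>v. \<delta> *\<^sub>R v) ` cball 0 1" by blast
          then have "(x - xi) + \<delta> *\<^sub>R (-v) \<in> S" unfolding S_def using True by (intro set_plus_intro)
          moreover have "(x - xi) + \<delta> *\<^sub>R (-v) = l - xi" using xe ue by (simp add: algebra_simps)
          ultimately have "l - xi \<in> S" by metis
          then show ?thesis using pe w True by simp
        next
          case False
          then show ?thesis using pe w by (simp add: indicator_def)
        qed
      qed
      have "sum_list (map (\<lambda>(xi, wi). wi * indicator T (x - xi)) xs)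
            \<le> sum_list (map (\<lambda>(xi, wi). wi * indicator S (l - xi)) xs)"
        using le by (intro sum_list_mono) auto
      also have "\<dots> \<le> 1" using xs l by auto
      finally show ?thesis .
    qed
    then show "xs \<in> ?B" using pts by auto
  qed
  show ?thesis unfolding M_omega_def M_omega_net_def S_def[symmetric]
    using sub by (rule SUP_subset_mono) simp
qed

end
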